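(* Let $\sigma$ be a gradual semantics satisfying Stability, let $\mathcal{Q}=\langle\mathcal{A},\mathcal{R}^-,\mathcal{R}^+,\tau\rangle$ be a QBAF and $\alpha\in\mathcal{A}$. (1) If $\sigma(\alpha)>\tau(\alpha)$, then there exists $r\in\mathcal{R}$ with $\phi^\alpha_\sigma(r)>0$. (2) If $\sigma(\alpha)<\tau(\alpha)$, then there exists $r\in\mathcal{R}$ with $\phi^\alpha_\sigma(r)<0$.
   Context: A QBAF is a quadruple $\mathcal{Q}=\langle\mathcal{A},\mathcal{R}^-,\mathcal{R}^+,\tau\rangle$ with $\mathcal{A}$ a finite set of arguments, $\mathcal{R}^-,\mathcal{R}^+\subseteq\mathcal{A}\times\mathcal{A}$ disjoint attack and support relations, and $\tau:\mathcal{A}\to[0,1]$ base scores; $\mathcal{R}=\mathcal{R}^-\cup\mathcal{R}^+$. A gradual semantics $\sigma$ assigns to each QBAF a strength $\sigma(\alpha)\in[0,1]$ to every argument; it is assumed well-defined on every QBAF considered. For $\mathcal{S}\subseteq\mathcal{R}$, $\sigma_{\mathcal{S}}(\alpha)$ denotes the strength of $\alpha$ in $\langle\mathcal{A},\mathcal{R}^-\cap\mathcal{S},\mathcal{R}^+\cap\mathcal{S},\tau\rangle$. The RAE from $r\in\mathcal{R}$ to $\alpha$ under $\sigma$ is $$\phi^\alpha_\sigma(r)=\sum_{\mathcal{S}\subseteq\mathcal{R}\setminus\{r\}}\frac{(|\mathcal{R}|-|\mathcal{S}|-1)!\,|\mathcal{S}|!}{|\mathcal{R}|!}\big[\sigma_{\mathcal{S}\cup\{r\}}(\alpha)-\sigma_{\mathcal{S}}(\alpha)\big].$$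 $\sigma$ satisfies Stability if in every QBAF, every argument with no incoming edges has strength equal to its base score. *)

theory Defs
  imports Main "HOL-Library.FuncSet" Complex_Main
begin

type_synonym 'a qbaf = "'a set \<times> ('a \<times> 'a) set \<times> ('a \<times> 'a) set \<times> ('a \<Rightarrow> real)"

definition args :: "'a qbaf \<Rightarrow> 'a set" where "args Q = fst Q"
definition att :: "'a qbaf \<Rightarrow> ('a \<times> 'a) set" where "att Q = fst (snd Q)"
definition supp :: "'a qbaf \<Rightarrow> ('a \<times> 'a) set" where "supp Q = fst (snd (snd Q))"
definition base :: "'a qbaf \<Rightarrow> 'a \<Rightarrow> real" where "base Q = snd (snd (snd Q))"
definition rels :: "'a qbaf \<Rightarrow> ('a \<times> 'a) set" where "rels Q = att Q \<union> supp Q"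

definition is_qbaf :: "'a qbaf \<Rightarrow> bool" where
  "is_qbaf Q \<longleftrightarrow> finite (args Q) \<and> att Q \<subseteq> args Q \<times> args Q \<and> supp Q \<subseteq> args Q \<times> args Q
     \<and> att Q \<inter> supp Q = {} \<and> (\<forall>a\<in>args Q. 0 \<le> base Q a \<and> base Q a \<le> 1)"

type_synonym 'a semantics = "'a qbaf \<Rightarrow> 'a \<Rightarrow> real"

definition gradual_semantics :: "'a semantics \<Rightarrow> bool" where
  "gradual_semantics \<sigma> \<longleftrightarrow> (\<forall>Q. is_qbaf Q \<longrightarrow> (\<forall>a\<in>args Q. 0 \<le> \<sigma> Q a \<and> \<sigma> Q a \<le> 1))"

definition stability :: "'a semantics \<Rightarrow> bool" where
  "stability \<sigma> \<longleftrightarrow> (\<forall>Q. is_qbaf Q \<longrightarrow>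
     (\<forall>a\<in>args Q. (\<forall>b. (b, a) \<notin> rels Q) \<longrightarrow> \<sigma> Q a = base Q a))"

definition restrict_rels :: "'a qbaf \<Rightarrow> ('a \<times> 'a) set \<Rightarrow> 'a qbaf" where
  "restrict_rels Q S = (args Q, att Q \<inter> S, supp Q \<inter> S, base Q)"

text \<open>Relation attribution explanation (Shapley value of edge r towards argument a).\<close>
definition RAE :: "'a semantics \<Rightarrow> 'a qbaf \<Rightarrow> 'a \<Rightarrow> ('a \<times> 'a) \<Rightarrow> real" where
  "RAE \<sigma> Q a r = (\<Sum>S \<in> Pow (rels Q - {r}).
     (fact (card (rels Q) - card S - 1) * fact (card S) / fact (card (rels Q)))
     * (\<sigma> (restrict_rels Q (S \<union> {r})) a - \<sigma> (restrict_rels Q S) a))"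

end

theory Submission
  imports Defs
begin

definition wsh :: "nat \<Rightarrow> nat \<Rightarrow> real" where
  "wsh n s = fact (n - s - 1) * fact s / fact n"

lemma swapA:
  assumes "finite R"
  shows "(\<Sum>r\<in>R. \<Sum>S\<in>Pow (R - {r}). g (insert r S)) = (\<Sum>T\<in>Pow R. real (card T) * g T)"
proof -
  have "(\<Sum>S\<in>Pow (R - {r}). g (insert r S)) = (\<Sum>T\<in>Pow R. if r \<in> T then g T else 0)"
    if "r \<in> R" for r
  proof -
    have inj: "inj_on (insert r) (Pow (R - {r}))"
      unfolding inj_on_def by (metis Diff_insert_absorb PowD subset_Diff_insert)
    have "(\<Sum>S\<in>Pow (R - {r}). g (insert r S)) = (\<Sum>T\<in>insert r ` Pow (R - {r}). g T)"
      by (simp add: sum.reindex[OF inj])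
    also have "insert r ` Pow (R - {r}) = {T \<in> Pow R. r \<in> T}"
    proof (rule set_eqI, rule iffI)
      fix T assume "T \<in> {T \<in> Pow R. r \<in> T}"
      then have "T = insert r (T - {r})" "T - {r} \<in> Pow (R - {r})" by auto
      then show "T \<in> insert r ` Pow (R - {r})" by blast
    qed (use that in auto)
    also have "(\<Sum>T\<in>{T \<in> Pow R. r \<in> T}. g T) = (\<Sum>T\<in>Pow R. if r \<in> T then g T else 0)"
      using assms by (intro sum.inter_filter) simp
    finally show ?thesis .
  qed
  then have "(\<Sum>r\<in>R. \<Sum>S\<in>Pow (R - {r}). g (insert r S)) = (\<Sum>r\<in>R. \<Sum>T\<in>Pow R. if r \<in> T then g T else 0)"
    by (rule sum.cong[OF refl])
  also have "\<dots> = (\<Sum>T\<in>Pow R. \<Sum>r\<in>R. if r \<in> T then g T else 0)" by (rule sum.swap)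
  also have "\<dots> = (\<Sum>T\<in>Pow R. real (card T) * g T)"
  proof (rule sum.cong[OF refl])
    fix T assume "T \<in> Pow R"
    then have "R \<inter> T = T" by auto
    then show "(\<Sum>r\<in>R. if r \<in> T then g T else 0) = real (card T) * g T"
      using assms by (simp add: sum.If_cases)
  qed
  finally show ?thesis .
qed

lemma swapB:
  assumes "finite R"
  shows "(\<Sum>r\<in>R. \<Sum>S\<in>Pow (R - {r}). h S) = (\<Sum>T\<in>Pow R. real (card R - card T) * h T)"
proof -
  have "(\<Sum>S\<in>Pow (R - {r}). h S) = (\<Sum>T\<in>Pow R. if r \<notin> T then h T else 0)"
    if "r \<in> R" for r
  proof -
    have "Pow (R - {r}) = {T \<in> Pow R. r \<notin> T}" by auto
    moreover have "(\<Sum>T\<in>{T \<in> Pow R. r \<notin> T}. h T) = (\<Sum>T\<in>Pow R. if r \<notin> T then h T else 0)"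
      using assms by (intro sum.inter_filter) simp
    ultimately show ?thesis by simp
  qed
  then have "(\<Sum>r\<in>R. \<Sum>S\<in>Pow (R - {r}). h S) = (\<Sum>r\<in>R. \<Sum>T\<in>Pow R. if r \<notin> T then h T else 0)"
    by (rule sum.cong[OF refl])
  also have "\<dots> = (\<Sum>T\<in>Pow R. \<Sum>r\<in>R. if r \<notin> T then h T else 0)" by (rule sum.swap)
  also have "\<dots> = (\<Sum>T\<in>Pow R. real (card R - card T) * h T)"
  proof (rule sum.cong[OF refl])
    fix T assume T: "T \<in> Pow R"
    have "R \<inter> {r. r \<notin> T} = R - T" by auto
    moreover have "card (R - T) = card R - card T"
      using T assms by (simp add: card_Diff_subset finite_subset)
    ultimately show "(\<Sum>r\<in>R. if r \<notin> T then h T else 0) = real (card R - card T) * h T"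
      using assms by (simp add: sum.If_cases)
  qed
  finally show ?thesis .
qed

lemma wA: "real (Suc k) * wsh n k = fact (n - Suc k) * fact (Suc k) / fact n"
  unfolding wsh_def by (simp add: fact_Suc)
lemma wB: "real (Suc m) * wsh n t = fact (Suc m) * fact t / fact n" if "n - t = Suc m" for n t m
proof -
  have "n - t - 1 = m" using that by simp
  then show ?thesis unfolding wsh_def using that by (simp add: fact_Suc)
qed
lemma coeff_num:
  assumes "t \<le> n" "0 < n"
  shows "real t * wsh n (t - 1) - real (n - t) * wsh n t = (if t = n then 1 else 0) - (if t = 0 then 1 else 0)"
proof -
  have A: "real t * wsh n (t - 1) = fact (n - t) * fact t / fact n" if "t > 0"
  proof -
    define k where "k = t - 1"
    have k: "t = Suc k" using that unfolding k_def by simp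
    show ?thesis unfolding k using wA[of k n] by simp
  qed
  have B: "real (n - t) * wsh n t = fact (n - t) * fact t / fact n" if "t < n"
  proof -
    define m where "m = n - t - 1"
    have m: "n - t = Suc m" using that unfolding m_def by simp
    show ?thesis unfolding m using wB[OF m] by simp
  qed
  have fn: "(fact n :: real) \<noteq> 0" by simp
  show ?thesis
  proof (cases "t = 0")
    case True
    have "real (n - t) * wsh n t = fact (n - t) * fact t / fact n"
      by (rule B) (use True assms in simp)
    also have "\<dots> = 1" using True fn by simp
    finally show ?thesis using True assms by simp
  next
    case False
    show ?thesis
    proof (cases "t = n")
      case True
      have "real t * wsh n (t - 1) = fact (n - t) * fact t / fact n"
        by (rule A) (use False in simp)
      also have "\<dots> = 1" using True fn by simp
      finally show ?thesis using True False by simp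
    next
      case False2: False
      have "t < n" using assms False2 by simp
      then have "real t * wsh n (t - 1) = real (n - t) * wsh n t"
        using A B False by simp
      then show ?thesis using False False2 by simp
    qed
  qed
qed
lemma coeff:
  assumes "finite R" "R \<noteq> {}" "T \<subseteq> R"
  shows "real (card T) * wsh (card R) (card T - 1) - real (card R - card T) * wsh (card R) (card T)
       = (if T = R then 1 else 0) - (if T = {} then 1 else 0)"
proof -
  have fT: "finite T" by (rule finite_subset[OF assms(3) assms(1)])
  have e1: "T = R \<longleftrightarrow> card T = card R" using card_subset_eq[OF assms(1) assms(3)] by blast
  have e2: "T = {} \<longleftrightarrow> card T = 0" using fT by simp
  have "card T \<le> card R" by (rule card_mono[OF assms(1) assms(3)])
  moreover have "0 < card R" using assms(1,2) by (simp add: card_gt_0_iff)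
  ultimately show ?thesis unfolding e1 e2 by (rule coeff_num)
qed

lemma efficiency:
  assumes "finite R"
  shows "(\<Sum>r\<in>R. \<Sum>S\<in>Pow (R - {r}). wsh (card R) (card S) * (v (S \<union> {r}) - v S)) = v R - v {}"
proof (cases "R = {}")
  case True then show ?thesis by simp
next
  case ne: False
  have c: "card (insert r S) = card S + 1" if "r \<in> R" "S \<in> Pow (R - {r})" for r S
  proof -
    have "finite S" "r \<notin> S" using that assms finite_subset[of S R] by auto
    then show ?thesis by simp
  qed
  have "(\<Sum>r\<in>R. \<Sum>S\<in>Pow (R - {r}). wsh (card R) (card S) * (v (S \<union> {r}) - v S))
      = (\<Sum>r\<in>R. \<Sum>S\<in>Pow (R - {r}). (\<lambda>T. wsh (card R) (card T - 1) * v T) (insert r S))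
      - (\<Sum>r\<in>R. \<Sum>S\<in>Pow (R - {r}). wsh (card R) (card S) * v S)"
    unfolding sum_subtractf[symmetric]
    by (intro sum.cong refl) (simp add: c algebra_simps)
  also have "\<dots> = (\<Sum>T\<in>Pow R. real (card T) * (wsh (card R) (card T - 1) * v T))
      - (\<Sum>T\<in>Pow R. real (card R - card T) * (wsh (card R) (card T) * v T))"
    using swapA[OF assms] swapB[OF assms] by simp
  also have "\<dots> = (\<Sum>T\<in>Pow R. ((if T = R then 1 else 0) - (if T = {} then 1 else 0)) * v T)"
    unfolding sum_subtractf[symmetric]
    by (intro sum.cong refl) (simp add: coeff[OF assms ne, symmetric] algebra_simps)
  also have "\<dots> = (\<Sum>T\<in>Pow R. if T = R then v T else 0) - (\<Sum>T\<in>Pow R. if T = {} then v T else 0)"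
    unfolding sum_subtractf[symmetric] by (intro sum.cong refl) auto
  also have "\<dots> = v R - v {}"
    using assms by (simp add: sum.delta')
  finally show ?thesis .
qed

theorem corollary1:
  fixes \<sigma> :: "'a semantics" and Q :: "'a qbaf" and \<alpha> :: 'a
  assumes "gradual_semantics \<sigma>" and "stability \<sigma>"
    and "is_qbaf Q" and "\<alpha> \<in> args Q"
  shows "(\<sigma> Q \<alpha> > base Q \<alpha> \<longrightarrow> (\<exists>r \<in> rels Q. RAE \<sigma> Q \<alpha> r > 0))
       \<and> (\<sigma> Q \<alpha> < base Q \<alpha> \<longrightarrow> (\<exists>r \<in> rels Q. RAE \<sigma> Q \<alpha> r < 0))"
proof -
  have fin: "finite (rels Q)"
    using assms(3) unfolding is_qbaf_def rels_def
    by (meson finite_SigmaI finite_UnI finite_subset)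
  have full: "restrict_rels Q (rels Q) = Q"
    unfolding restrict_rels_def rels_def args_def att_def supp_def base_def
    by (cases Q) auto
  have q0: "is_qbaf (restrict_rels Q {})"
    using assms(3) unfolding is_qbaf_def restrict_rels_def args_def att_def supp_def base_def by auto
  have empty: "\<sigma> (restrict_rels Q {}) \<alpha> = base Q \<alpha>"
  proof -
    have "\<sigma> (restrict_rels Q {}) \<alpha> = base (restrict_rels Q {}) \<alpha>"
      using assms(2) q0 assms(4) unfolding stability_def
      by (auto simp: restrict_rels_def args_def rels_def att_def supp_def)
    then show ?thesis by (simp add: restrict_rels_def base_def)
  qed
  have R: "RAE \<sigma> Q \<alpha> r = (\<Sum>S\<in>Pow (rels Q - {r}). wsh (card (rels Q)) (card S) *
      ((\<lambda>S. \<sigma> (restrict_rels Q S) \<alpha>) (S \<union> {r}) - (\<lambda>S. \<sigma> (restrict_rels Q S) \<alpha>) S))" for r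
    unfolding RAE_def wsh_def by simp
  have sum: "(\<Sum>r\<in>rels Q. RAE \<sigma> Q \<alpha> r) = \<sigma> Q \<alpha> - base Q \<alpha>"
    using efficiency[OF fin, of "\<lambda>S. \<sigma> (restrict_rels Q S) \<alpha>"] by (simp add: R full empty)
  show ?thesis
  proof (intro conjI impI)
    assume "\<sigma> Q \<alpha> > base Q \<alpha>"
    show "\<exists>r \<in> rels Q. RAE \<sigma> Q \<alpha> r > 0"
    proof (rule ccontr)
      assume "\<not> ?thesis"
      then have "(\<Sum>r\<in>rels Q. RAE \<sigma> Q \<alpha> r) \<le> 0" by (intro sum_nonpos) auto
      with sum \<open>\<sigma> Q \<alpha> > base Q \<alpha>\<close> show False by simp
    qed
  next
    assume "\<sigma> Q \<alpha> < base Q \<alpha>"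
    show "\<exists>r \<in> rels Q. RAE \<sigma> Q \<alpha> r < 0"
    proof (rule ccontr)
      assume "\<not> ?thesis"
      then have "(\<Sum>r\<in>rels Q. RAE \<sigma> Q \<alpha> r) \<ge> 0" by (intro sum_nonneg) auto
      with sum \<open>\<sigma> Q \<alpha> < base Q \<alpha>\<close> show False by simp
    qed
  qed
qed

end
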